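(* For all even integers $a, b \ge 2$, $R_\mathrm{ord}(M_a^\mathrm{nest}, M_b^\mathrm{nest}) = a + b - 2$.
   Context: All graphs are finite, simple and undirected, and a graph of order $n$ has vertex set $\{0,1,\ldots,n-1\}$; $K_n$ is the complete graph on $\{0,\ldots,n-1\}$. A $2$-edge-coloring of $K_n$ assigns each edge a color in $\{1,2\}$. For a graph $H$ and such a coloring, an embedding of $H$ in color $j$ is an injective map $\varphi\colon V(H)\to V(K_n)$ such that for every edge $uv$ of $H$ the edge $\{\varphi(u),\varphi(v)\}$ has color $j$; it is increasing if $\varphi(0)<\cdots<\varphi(|H|-1)$. The ordered Ramsey number $R_\mathrm{ord}(H_1,H_2)$ is the smallest $n$ such that every $2$-edge-coloring of $K_n$ admits an increasing embedding of $H_1$ in color $1$ or an increasing embedding of $H_2$ in color $2$. For even $n\ge2$, the nested matching $M_n^\mathrm{nest}$ is the graph of order $n$ whose edges are exactly $\{v, n-1-v\}$ for $0\le v\le n/2-1$. *)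

theory Defs
  imports Main
begin

text \<open>A finite simple graph of order n on vertex set {0..<n}, represented by its order
 and its edge set (a set of 2-element subsets of {0..<n}).\<close>

type_synonym graph = "nat \<times> nat set set"

definition order :: "graph \<Rightarrow> nat" where "order H = fst H"
definition edges :: "graph \<Rightarrow> nat set set" where "edges H = snd H"

definition two_coloring :: "nat \<Rightarrow> (nat set \<Rightarrow> nat) \<Rightarrow> bool" where
  "two_coloring n c \<longleftrightarrow> (\<forall>u<n. \<forall>v<n. u \<noteq> v \<longrightarrow> c {u, v} \<in> {1, 2})"

definition incr_embedding :: "graph \<Rightarrow> nat \<Rightarrow> (nat set \<Rightarrow> nat) \<Rightarrow> nat \<Rightarrow> (nat \<Rightarrow> nat) \<Rightarrow> bool" where
  "incr_embedding H n c j \<phi> \<longleftrightarrow>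
     \<phi> ` {0..<order H} \<subseteq> {0..<n} \<and>
     strict_mono_on {0..<order H} \<phi> \<and>
     (\<forall>u<order H. \<forall>v<order H. {u, v} \<in> edges H \<longrightarrow> c {\<phi> u, \<phi> v} = j)"

definition ordered_ramsey_property :: "graph \<Rightarrow> graph \<Rightarrow> nat \<Rightarrow> bool" where
  "ordered_ramsey_property H1 H2 n \<longleftrightarrow>
     (\<forall>c. two_coloring n c \<longrightarrow>
        (\<exists>\<phi>. incr_embedding H1 n c 1 \<phi>) \<or> (\<exists>\<phi>. incr_embedding H2 n c 2 \<phi>))"

definition R_ord :: "graph \<Rightarrow> graph \<Rightarrow> nat" where
  "R_ord H1 H2 = (LEAST n. ordered_ramsey_property H1 H2 n)"

definition nested_matching :: "nat \<Rightarrow> graph" where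
  "nested_matching n = (n, {{v, n - 1 - v} | v. v < n div 2})"

end

theory Submission
  imports Defs
begin

definition nest :: "(nat set \<Rightarrow> nat) \<Rightarrow> nat \<Rightarrow> nat \<Rightarrow> nat \<Rightarrow> nat \<Rightarrow> (nat \<Rightarrow> nat) \<Rightarrow> bool" where
  "nest c j k s e \<phi> \<longleftrightarrow> (\<forall>i<2*k. s \<le> \<phi> i \<and> \<phi> i < e) \<and>
     (\<forall>i l. i < l \<longrightarrow> l < 2*k \<longrightarrow> \<phi> i < \<phi> l) \<and>
     (\<forall>i<k. c {\<phi> i, \<phi> (2*k-1-i)} = j)"

lemma nest_ext:
  assumes "nest c j k (Suc s) (e - 1) \<psi>" "c {s, e-1} = j" "s < e - 1"
  shows "nest c j (Suc k) s e (\<lambda>i. if i = 0 then s else if i = 2*k+1 then e-1 else \<psi> (i-1))"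
proof -
  have A: "\<forall>i<2*k. Suc s \<le> \<psi> i \<and> \<psi> i < e - 1" and
       B: "\<forall>i l. i < l \<longrightarrow> l < 2*k \<longrightarrow> \<psi> i < \<psi> l" and
       C: "\<forall>i<k. c {\<psi> i, \<psi> (2*k-1-i)} = j" using assms(1) unfolding nest_def by auto
  let ?f = "(\<lambda>i. if i = 0 then s else if i = 2*k+1 then e-1 else \<psi> (i-1))"
  have 1: "\<forall>i<2*Suc k. s \<le> ?f i \<and> ?f i < e"
  proof (intro allI impI)
    fix i assume hi: "i < 2 * Suc k"
    show "s \<le> ?f i \<and> ?f i < e"
    proof (cases "i = 0 \<or> i = 2*k+1")
      case True then show ?thesis using assms(3) by auto
    next
      case False
      then have "i - 1 < 2*k" using hi by (cases i) auto
      then have "Suc s \<le> \<psi> (i-1) \<and> \<psi> (i-1) < e - 1" using A by blast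
      then show ?thesis using False by auto
    qed
  qed
  have 2: "\<forall>i l. i < l \<longrightarrow> l < 2*Suc k \<longrightarrow> ?f i < ?f l"
  proof (intro allI impI)
    fix i l assume h: "i < l" "l < 2 * Suc k"
    have fl: "?f l \<le> e - 1" "l \<noteq> 2*k+1 \<Longrightarrow> ?f l = \<psi> (l-1) \<and> Suc s \<le> \<psi> (l-1) \<and> \<psi> (l-1) < e - 1"
    proof -
      show "l \<noteq> 2*k+1 \<Longrightarrow> ?f l = \<psi> (l-1) \<and> Suc s \<le> \<psi> (l-1) \<and> \<psi> (l-1) < e - 1"
      proof -
        assume l: "l \<noteq> 2*k+1"
        then have "l - 1 < 2*k" using h by (cases l) auto
        then show ?thesis using A h l by simp
      qed
      then show "?f l \<le> e - 1" by (cases "l = 2*k+1") auto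
    qed
    show "?f i < ?f l"
    proof (cases "i = 0")
      case True
      then show ?thesis using h fl assms(3) by (cases "l = 2*k+1") auto
    next
      case False
      have ii: "i - 1 < 2*k" "i \<noteq> 2*k+1" using h False by (cases i; auto)+
      then have fi: "?f i = \<psi> (i-1)" "\<psi> (i-1) < e - 1" using A False by auto
      show ?thesis
      proof (cases "l = 2*k+1")
        case True then show ?thesis using fi by simp
      next
        case lF: False
        have "\<psi> (i-1) < \<psi> (l-1)" using B h lF False fl(2)[OF lF] ii by simp
        then show ?thesis using fi fl(2)[OF lF] by simp
      qed
    qed
  qed
  have 3: "\<forall>i<Suc k. c {?f i, ?f (2*Suc k-1-i)} = j"
  proof (intro allI impI)
    fix i assume h: "i < Suc k"
    show "c {?f i, ?f (2*Suc k-1-i)} = j"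
    proof (cases "i = 0")
      case True then show ?thesis using assms(2) by simp
    next
      case False
      have e1: "2*Suc k-1-i = Suc (2*k-1-(i-1))" "2*Suc k-1-i \<noteq> 2*k+1" "i - 1 < k" using h False by auto
      then have "?f i = \<psi> (i-1)" "?f (2*Suc k-1-i) = \<psi> (2*k-1-(i-1))" using False by auto
      moreover have "c {\<psi> (i-1), \<psi> (2*k-1-(i-1))} = j" using C e1(3) by blast
      ultimately show ?thesis by simp
    qed
  qed
  show ?thesis unfolding nest_def using 1 2 3 by blast
qed

lemma nest0: "nest c j 0 s e \<psi>" unfolding nest_def by simp

lemma upper:
  assumes "p \<ge> 1" "q \<ge> 1" "e = s + 2*p + 2*q - 2"
    "\<forall>u v. s \<le> u \<longrightarrow> u < v \<longrightarrow> v < e \<longrightarrow> c {u,v} \<in> {1,2}"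
  shows "(\<exists>\<phi>. nest c 1 p s e \<phi>) \<or> (\<exists>\<phi>. nest c 2 q s e \<phi>)"
  using assms
proof (induction "p+q" arbitrary: p q s e)
  case 0
  then show ?case by simp
next
  case (Suc m)
  have se: "s < e - 1" using Suc.prems by simp
  have col: "c {s, e-1} \<in> {1,2}" using Suc.prems(4) se by simp
  show ?case
  proof (cases "c {s, e-1} = 1")
    case True
    show ?thesis
    proof (cases "p = 1")
      case True
      then show ?thesis using nest_ext[OF nest0[of c 1 "Suc s" "e-1"] \<open>c {s, e-1} = 1\<close> se] by auto
    next
      case False
      have "(\<exists>\<phi>. nest c 1 (p-1) (Suc s) (e-1) \<phi>) \<or> (\<exists>\<phi>. nest c 2 q (Suc s) (e-1) \<phi>)"
        apply (rule Suc.hyps(1)[of "p-1" q])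
        using Suc.prems False Suc.hyps(2) by auto
      then show ?thesis
      proof
        assume "\<exists>\<phi>. nest c 1 (p-1) (Suc s) (e-1) \<phi>"
        then obtain \<psi> where "nest c 1 (p-1) (Suc s) (e-1) \<psi>" by blast
        from nest_ext[OF this \<open>c {s, e-1} = 1\<close> se] have "\<exists>\<phi>. nest c 1 (Suc (p-1)) s e \<phi>" by blast
        moreover have "Suc (p-1) = p" using Suc.prems(1) by simp
        ultimately show ?thesis by simp
      next
        assume "\<exists>\<phi>. nest c 2 q (Suc s) (e-1) \<phi>"
        then obtain \<psi> where "nest c 2 q (Suc s) (e-1) \<psi>" by blast
        then have "nest c 2 q s e \<psi>" unfolding nest_def by force
        then show ?thesis by blast
      qed
    qed
  next
    case False
    then have c2: "c {s, e-1} = 2" using col by auto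
    show ?thesis
    proof (cases "q = 1")
      case True
      then show ?thesis using nest_ext[OF nest0[of c 2 "Suc s" "e-1"] c2 se] by auto
    next
      case False
      have "(\<exists>\<phi>. nest c 1 p (Suc s) (e-1) \<phi>) \<or> (\<exists>\<phi>. nest c 2 (q-1) (Suc s) (e-1) \<phi>)"
        apply (rule Suc.hyps(1)[of p "q-1"])
        using Suc.prems False Suc.hyps(2) by auto
      then show ?thesis
      proof
        assume "\<exists>\<phi>. nest c 2 (q-1) (Suc s) (e-1) \<phi>"
        then obtain \<psi> where "nest c 2 (q-1) (Suc s) (e-1) \<psi>" by blast
        from nest_ext[OF this c2 se] have "\<exists>\<phi>. nest c 2 (Suc (q-1)) s e \<phi>" by blast
        moreover have "Suc (q-1) = q" using Suc.prems(2) by simp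
        ultimately show ?thesis by simp
      next
        assume "\<exists>\<phi>. nest c 1 p (Suc s) (e-1) \<phi>"
        then obtain \<psi> where "nest c 1 p (Suc s) (e-1) \<psi>" by blast
        then have "nest c 1 p s e \<psi>" unfolding nest_def by force
        then show ?thesis by blast
      qed
    qed
  qed
qed


lemma nest_emb:
  assumes "nest c j k 0 n \<phi>"
  shows "incr_embedding (nested_matching (2*k)) n c j \<phi>"
proof -
  have A: "\<forall>i<2*k. \<phi> i < n" and B: "\<forall>i l. i < l \<longrightarrow> l < 2*k \<longrightarrow> \<phi> i < \<phi> l"
    and C: "\<forall>i<k. c {\<phi> i, \<phi> (2*k-1-i)} = j" using assms unfolding nest_def by auto
  have 1: "\<phi> ` {0..<2*k} \<subseteq> {0..<n}" using A by auto
  have 2: "strict_mono_on {0..<2*k} \<phi>" unfolding strict_mono_on_def using B by auto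
  have 3: "c {\<phi> u, \<phi> v} = j" if "{u, v} \<in> {{w, 2*k - 1 - w} | w. w < 2*k div 2}" for u v
  proof -
    have "\<exists>w. {u,v} = {w, 2*k-1-w} \<and> w < 2*k div 2" using that by simp
    then obtain w where w0: "{u,v} = {w, 2*k-1-w} \<and> w < 2*k div 2" by (rule exE)
    then have w: "{u,v} = {w, 2*k-1-w}" "w < k" by auto
    then have "c {\<phi> w, \<phi> (2*k-1-w)} = j" using C by blast
    moreover have "(u = w \<and> v = 2*k-1-w) \<or> (u = 2*k-1-w \<and> v = w)" using w(1)
      by (simp add: doubleton_eq_iff)
    ultimately show ?thesis by (metis insert_commute)
  qed
  show ?thesis unfolding incr_embedding_def nested_matching_def order_def edges_def fst_conv snd_conv
    apply (intro conjI 1 2 allI impI)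
    using 3 by blast
qed

lemma sm_gap:
  fixes \<phi> :: "nat \<Rightarrow> nat" and a i j :: nat
  assumes "strict_mono_on {0..<a} \<phi>"
  shows "j < a \<Longrightarrow> i \<le> j \<Longrightarrow> \<phi> i + (j - i) \<le> \<phi> j"
proof (induction j)
  case 0 then show ?case by simp
next
  case (Suc j)
  show ?case
  proof (cases "i = Suc j")
    case True then show ?thesis by simp
  next
    case False
    then have "\<phi> i + (j - i) \<le> \<phi> j" using Suc by simp
    moreover have "\<phi> j < \<phi> (Suc j)" using assms(1) Suc.prems
      by (intro strict_mono_onD[OF assms(1)]) auto
    ultimately show ?thesis using False Suc.prems by linarith
  qed
qed

lemma upper_bound:
  assumes "even a" "even b" "a \<ge> 2" "b \<ge> 2"
  shows "ordered_ramsey_property (nested_matching a) (nested_matching b) (a + b - 2)"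
  unfolding ordered_ramsey_property_def
proof (intro allI impI)
  fix c assume tc: "two_coloring (a + b - 2) c"
  obtain p q where pq: "a = 2*p" "b = 2*q" "p \<ge> 1" "q \<ge> 1" using assms by (auto elim!: evenE)
  have "\<forall>u v. 0 \<le> u \<longrightarrow> u < v \<longrightarrow> v < a + b - 2 \<longrightarrow> c {u,v} \<in> {1,2}"
    using tc unfolding two_coloring_def by auto
  then have "(\<exists>\<phi>. nest c 1 p 0 (a+b-2) \<phi>) \<or> (\<exists>\<phi>. nest c 2 q 0 (a+b-2) \<phi>)"
    using upper[of p q "a+b-2" 0 c] pq by auto
  then show "(\<exists>\<phi>. incr_embedding (nested_matching a) (a + b - 2) c 1 \<phi>) \<or>
             (\<exists>\<phi>. incr_embedding (nested_matching b) (a + b - 2) c 2 \<phi>)"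
    using nest_emb pq by blast
qed

lemma lower_bound:
  assumes "even a" "even b" "a \<ge> 2" "b \<ge> 2" "n < a + b - 2"
  shows "\<not> ordered_ramsey_property (nested_matching a) (nested_matching b) n"
proof
  assume H: "ordered_ramsey_property (nested_matching a) (nested_matching b) n"
  obtain p q where pq: "a = 2*p" "b = 2*q" "p \<ge> 1" "q \<ge> 1" using assms by (auto elim!: evenE)
  define N where "N = a + b - 3"
  define c where "c = (\<lambda>S::nat set. if Min S + 2 \<le> p \<or> Max S + p \<ge> N + 1 then 1 else (2::nat))"
  have tc: "two_coloring n c" unfolding two_coloring_def c_def by simp
  have nN: "n \<le> N" using assms(5) N_def pq by simp
  have cv: "c {x, y} = (if x + 2 \<le> p \<or> y + p \<ge> N + 1 then 1 else 2)" if "x < y" for x y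
    using that unfolding c_def by (simp add: min_def max_def)
  from H tc consider (one) \<phi> where "incr_embedding (nested_matching a) n c 1 \<phi>"
    | (two) \<phi> where "incr_embedding (nested_matching b) n c 2 \<phi>"
    unfolding ordered_ramsey_property_def by blast
  then show False
  proof cases
    case one
    have im: "\<phi> ` {0..<a} \<subseteq> {0..<n}" and sm: "strict_mono_on {0..<a} \<phi>"
      and ed: "\<forall>u<a. \<forall>v<a. {u, v} \<in> {{w, a - 1 - w} | w. w < a div 2} \<longrightarrow> c {\<phi> u, \<phi> v} = 1"
      using one unfolding incr_embedding_def nested_matching_def order_def edges_def by simp_all
    have "{p-1, p} \<in> {{w, a - 1 - w} | w. w < a div 2}"
      using pq by (intro CollectI exI[of _ "p-1"]) auto
    moreover have "p - 1 < a" "p < a" "a - 1 - (p - 1) = p" using pq by auto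
    ultimately have c1: "c {\<phi> (p-1), \<phi> p} = 1" using ed[rule_format, of "p-1" p] by simp
    have g1: "\<phi> 0 + (p - 1 - 0) \<le> \<phi> (p-1)" using sm_gap[OF sm, of "p-1" 0] pq by auto
    have g2: "\<phi> p + (a - 1 - p) \<le> \<phi> (a-1)" using sm_gap[OF sm, of "a-1" p] pq by auto
    have g3: "\<phi> (a-1) < n" using im pq by (auto simp: image_subset_iff)
    have lt: "\<phi> (p-1) < \<phi> p" using strict_mono_onD[OF sm, of "p-1" p] pq by auto
    have x1: "\<not> (\<phi> (p-1) + 2 \<le> p)" using g1 pq by linarith
    have x2: "\<not> (\<phi> p + p \<ge> N + 1)" using g2 g3 nN pq by linarith
    have "c {\<phi> (p-1), \<phi> p} = 2" using cv[OF lt] x1 x2 by simp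
    then show False using c1 by simp
  next
    case two
    have im: "\<phi> ` {0..<b} \<subseteq> {0..<n}" and sm: "strict_mono_on {0..<b} \<phi>"
      and ed: "\<forall>u<b. \<forall>v<b. {u, v} \<in> {{w, b - 1 - w} | w. w < b div 2} \<longrightarrow> c {\<phi> u, \<phi> v} = 2"
      using two unfolding incr_embedding_def nested_matching_def order_def edges_def by simp_all
    have "{0, b-1} \<in> {{w, b - 1 - w} | w. w < b div 2}"
      using pq by (intro CollectI exI[of _ 0]) auto
    moreover have "0 < b" "b - 1 < b" "b - 1 - 0 = b - 1" using pq by auto
    ultimately have c2: "c {\<phi> 0, \<phi> (b-1)} = 2" using ed[rule_format, of 0 "b-1"] by simp
    have g: "\<phi> 0 + (b - 1 - 0) \<le> \<phi> (b-1)" using sm_gap[OF sm, of "b-1" 0] pq by auto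
    have lt: "\<phi> 0 < \<phi> (b-1)" using g pq by auto
    have "\<not> (\<phi> 0 + 2 \<le> p \<or> \<phi> (b-1) + p \<ge> N + 1)" using c2 cv[OF lt] by (auto split: if_splits)
    then show False using g N_def pq by linarith
  qed
qed

theorem theorem4p27:
  fixes a b :: nat
  assumes "even a" "even b" "a \<ge> 2" "b \<ge> 2"
  shows "R_ord (nested_matching a) (nested_matching b) = a + b - 2"
  unfolding R_ord_def
proof (rule Least_equality)
  show "ordered_ramsey_property (nested_matching a) (nested_matching b) (a + b - 2)"
    using upper_bound assms by blast
  fix n assume "ordered_ramsey_property (nested_matching a) (nested_matching b) n"
  then show "a + b - 2 \<le> n" using lower_bound[OF assms] by (meson not_le)
qed

end
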